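(* Let $G$ and $H$ be word-representable graphs, with $H$ rooted at some vertex. Then $l(G \circ H) \le |H|\,l(G) + |G|\,l(H) + (|H|-1)\kappa_G$, where $\kappa_G$ is the size of a maximum clique of $G$.
   Context: All graphs are simple and undirected; $|G|$ denotes the number of vertices of $G$. Letters $x,y$ alternate in a word $w$ if deleting all other letters from $w$ yields $xyxy\ldots$ or $yxyx\ldots$ (of either parity). A word $w$ over $V(G)$ represents $G$ if every vertex occurs in $w$ and for all distinct $x,y$, $xy\in E(G)$ iff $x,y$ alternate in $w$; $G$ is word-representable if such a word exists, and $l(G)$ is the minimum length of a word representing $G$. For a graph $G$ and a rooted graph $H$, the rooted product $G\circ H$ is obtained by taking $|V(G)|$ disjoint copies of $H$, one for each vertex $v$ of $G$, and identifying each vertex $v$ of $G$ with the root of its copy of $H$. *)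

theory Defs
  imports Main
begin

definition simple_graph :: "'a set \<Rightarrow> ('a \<Rightarrow> 'a \<Rightarrow> bool) \<Rightarrow> bool" where
  "simple_graph V E \<longleftrightarrow> finite V \<and> (\<forall>x y. E x y \<longrightarrow> E y x) \<and> (\<forall>x. \<not> E x x)
     \<and> (\<forall>x y. E x y \<longrightarrow> x \<in> V \<and> y \<in> V)"

definition alternate :: "'a list \<Rightarrow> 'a \<Rightarrow> 'a \<Rightarrow> bool" where
  "alternate w x y \<longleftrightarrow>
     (let u = filter (\<lambda>z. z = x \<or> z = y) w in
        \<forall>i. Suc i < length u \<longrightarrow> u ! i \<noteq> u ! Suc i)"

definition represents :: "'a set \<Rightarrow> ('a \<Rightarrow> 'a \<Rightarrow> bool) \<Rightarrow> 'a list \<Rightarrow> bool" where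
  "represents V E w \<longleftrightarrow> set w = V \<and>
     (\<forall>x\<in>V. \<forall>y\<in>V. x \<noteq> y \<longrightarrow> (E x y \<longleftrightarrow> alternate w x y))"

definition word_representable :: "'a set \<Rightarrow> ('a \<Rightarrow> 'a \<Rightarrow> bool) \<Rightarrow> bool" where
  "word_representable V E \<longleftrightarrow> (\<exists>w. represents V E w)"

definition min_rep_length :: "'a set \<Rightarrow> ('a \<Rightarrow> 'a \<Rightarrow> bool) \<Rightarrow> nat" where
  "min_rep_length V E = (LEAST n. \<exists>w. represents V E w \<and> length w = n)"

definition is_clique :: "'a set \<Rightarrow> ('a \<Rightarrow> 'a \<Rightarrow> bool) \<Rightarrow> 'a set \<Rightarrow> bool" where
  "is_clique V E K \<longleftrightarrow> K \<subseteq> V \<and> (\<forall>x\<in>K. \<forall>y\<in>K. x \<noteq> y \<longrightarrow> E x y)"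

definition clique_number :: "'a set \<Rightarrow> ('a \<Rightarrow> 'a \<Rightarrow> bool) \<Rightarrow> nat" where
  "clique_number V E = Max (card ` {K. is_clique V E K})"

text \<open>Rooted product G \<circ> H (H rooted at r). Vertex (v,h) is the copy of h in the
  copy of H attached to v; the vertex v of G is identified with (v,r).\<close>
definition rooted_prod_V :: "'a set \<Rightarrow> 'b set \<Rightarrow> ('a \<times> 'b) set" where
  "rooted_prod_V VG VH = VG \<times> VH"

definition rooted_prod_E :: "('a \<Rightarrow> 'a \<Rightarrow> bool) \<Rightarrow> ('b \<Rightarrow> 'b \<Rightarrow> bool) \<Rightarrow> 'b
     \<Rightarrow> ('a \<times> 'b) \<Rightarrow> ('a \<times> 'b) \<Rightarrow> bool" where
  "rooted_prod_E EG EH r p q \<longleftrightarrow>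
     (fst p = fst q \<and> EH (snd p) (snd q)) \<or> (snd p = r \<and> snd q = r \<and> EG (fst p) (fst q))"

end

theory Submission
  imports Defs
begin

lemma dist_adj: "distinct xs \<Longrightarrow> distinct_adj xs"
  by (induct xs) (auto simp: distinct_adj_Cons)

lemma alt_iff: "alternate w x y \<longleftrightarrow> distinct_adj (filter (\<lambda>z. z = x \<or> z = y) w)"
  unfolding alternate_def Let_def distinct_adj_conv_nth by simp

lemma alt_sym: "alternate w x y \<longleftrightarrow> alternate w y x"
proof -
  have "(\<lambda>z. z = x \<or> z = y) = (\<lambda>z. z = y \<or> z = x)" by auto
  thus ?thesis unfolding alt_iff by simp
qed

lemma alt_filter:
  assumes "P x" "P y" shows "alternate (filter P w) x y \<longleftrightarrow> alternate w x y"
proof -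
  have "filter (\<lambda>z. z = x \<or> z = y) (filter P w) = filter (\<lambda>z. z = x \<or> z = y) w"
  proof -
    have "(\<lambda>z. P z \<and> (z = x \<or> z = y)) = (\<lambda>z. z = x \<or> z = y)" using assms by auto
    thus ?thesis unfolding filter_filter by simp
  qed
  thus ?thesis by (simp add: alt_iff)
qed

lemma alt_map:
  assumes "inj f" shows "alternate (map f w) (f x) (f y) \<longleftrightarrow> alternate w x y"
proof -
  have inj: "f a = f b \<longleftrightarrow> a = b" for a b using assms by (simp add: inj_eq)
  have "filter (\<lambda>z. z = f x \<or> z = f y) (map f w) = map f (filter (\<lambda>z. z = x \<or> z = y) w)"
    by (induct w) (simp_all add: inj)
  moreover have "inj_on f S" for S using inj by (simp add: inj_on_def)
  ultimately show ?thesis by (simp add: alt_iff distinct_adj_map_iff)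
qed

lemma alt_rev: "alternate (rev w) x y \<longleftrightarrow> alternate w x y"
  by (simp add: alt_iff rev_filter[symmetric])

lemma rep_rev: "represents V E w \<Longrightarrow> represents V E (rev w)"
  unfolding represents_def by (simp add: alt_rev)

lemma remdups_append_filter:
  "remdups (xs @ ys) = remdups (filter (\<lambda>x. x \<notin> set ys) xs) @ remdups ys"
  by (induct xs) auto

lemma last_remdups: "xs \<noteq> [] \<Longrightarrow> last (remdups xs) = last xs"
  using remdups_filter_last[of "\<lambda>_. True" xs] by simp

lemma filter_prefix_take:
  "filter P xs = filter P (take i xs) @ filter P (drop i xs)"
  by (metis append_take_drop_id filter_append)

lemma rep_app_prefix:
  assumes rep: "represents V E w"
  shows "represents V E (w @ take i (remdups w))"
  unfolding represents_def
proof (intro conjI ballI impI)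
  have "set (take i (remdups w)) \<subseteq> set w" using set_take_subset by fastforce
  thus "set (w @ take i (remdups w)) = V" using rep unfolding represents_def by auto
next
  fix x y assume xV: "x \<in> V" and yV: "y \<in> V" and xy: "x \<noteq> y"
  have sw: "set w = V" using rep unfolding represents_def by auto
  define P where "P = (\<lambda>z. z = x \<or> z = y)"
  define u where "u = filter P w"
  define t where "t = filter P (take i (remdups w))"
  have key: "distinct_adj (u @ t) \<longleftrightarrow> distinct_adj u"
  proof
    assume "distinct_adj u"
    have dt: "distinct t" unfolding t_def by (simp add: distinct_take)
    hence dat: "distinct_adj t" 
      by (rule dist_adj)
    have un: "u \<noteq> []" unfolding u_def P_def using xV sw by (auto simp: filter_empty_conv)
    have su0: "set u \<subseteq> {x,y}" unfolding u_def P_def by auto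
    have lu: "last u \<in> {x,y}" using un su0 last_in_set by blast
    have su: "set u = {x,y}" unfolding u_def P_def using xV yV sw by auto
    have "filter P (remdups w) = remdups u" unfolding u_def by (simp add: remdups_filter)
    also have "remdups u = [if last u = x then y else x, last u]"
    proof -
      have d: "distinct (remdups u)" by simp
      have s: "set (remdups u) = {x,y}" using su by simp
      have l: "length (remdups u) = 2" using su xy
        by (simp add: length_remdups_card_conv)
      have la: "last (remdups u) = last u" using un by (simp add: last_remdups)
      have "\<exists>a b. remdups u = [a,b]" using l by (auto simp: numeral_2_eq_2 length_Suc_conv)
      then obtain a b where ab: "remdups u = [a,b]" by blast
      show ?thesis using ab la s xy d lu by auto
    qed
    finally have fr: "filter P (remdups w) = [if last u = x then y else x, last u]" .
    have "t @ filter P (drop i (remdups w)) = filter P (remdups w)"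
      unfolding t_def by (metis filter_prefix_take)
    hence "t = [] \<or> hd t = (if last u = x then y else x)" using fr
      by (cases t) auto
    hence "t = [] \<or> last u \<noteq> hd t" using xy by (cases "last u = x") auto
    thus "distinct_adj (u @ t)" using \<open>distinct_adj u\<close> dat
      unfolding distinct_adj_append_iff by blast
  qed auto
  have "alternate (w @ take i (remdups w)) x y \<longleftrightarrow> distinct_adj (u @ t)"
    unfolding alt_iff u_def t_def P_def by simp
  also have "\<dots> \<longleftrightarrow> alternate w x y" using key unfolding alt_iff u_def P_def by simp
  finally show "E x y \<longleftrightarrow> alternate (w @ take i (remdups w)) x y"
    using rep xV yV xy unfolding represents_def by auto
qed

definition cnt :: "'a \<Rightarrow> 'a list \<Rightarrow> nat" where
  "cnt v xs = length (filter (\<lambda>z. z = v) xs)"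

lemma cnt_simps[simp]: "cnt v [] = 0" "cnt v (x # xs) = (if x = v then Suc (cnt v xs) else cnt v xs)"
  by (auto simp: cnt_def)

lemma cnt_0_iff: "cnt v xs = 0 \<longleftrightarrow> v \<notin> set xs"
  by (induct xs) auto

definition emit :: "'b list \<Rightarrow> 'b list \<Rightarrow> 'b list \<Rightarrow> 'b \<Rightarrow> bool \<Rightarrow> bool \<Rightarrow> 'b list" where
  "emit C q1 q2 r seen more =
     (if \<not> seen then C @ q1 @ r # q2 @ q1 else if more then r # q2 @ q1 else r # q2)"

lemma emit_simps: "emit C q1 q2 r False b = C @ q1 @ r # q2 @ q1"
  "emit C q1 q2 r True True = r # q2 @ q1" "emit C q1 q2 r True False = r # q2"
  by (simp_all add: emit_def)

fun mid :: "(bool \<Rightarrow> bool \<Rightarrow> 'b list) \<Rightarrow> 'a set \<Rightarrow> 'a list \<Rightarrow> ('a \<times> 'b) list" where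
  "mid em S [] = []"
| "mid em S (x # xs) = map (Pair x) (em (x \<in> S) (x \<in> set xs)) @ mid em (insert x S) xs"

lemma mid_split: "\<exists>a b. mid em S (ys @ x # zs) = a @ map (Pair x) (em (x \<in> S \<union> set ys) (x \<in> set zs)) @ b"
proof (induct ys arbitrary: S)
  case Nil then show ?case by auto
next
  case (Cons y ys)
  obtain a b where "mid em (insert y S) (ys @ x # zs) = a @ map (Pair x) (em (x \<in> insert y S \<union> set ys) (x \<in> set zs)) @ b"
    using Cons by blast
  then show ?case by (rule_tac x="map (Pair y) (em (y \<in> S) (y \<in> set (ys @ x # zs))) @ a" in exI) auto
qed

lemma mid_fst: "set (map fst (mid em S xs)) \<subseteq> set xs"
  by (induct xs arbitrary: S) auto

definition Tseen :: "'b list \<Rightarrow> 'b list \<Rightarrow> 'b \<Rightarrow> nat \<Rightarrow> 'b list" where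
  "Tseen q q2 r k = (if k = 0 then [] else r # q2 @ concat (replicate (k - 1) q))"

lemma filter_fst_Pair: "filter (\<lambda>z. fst z = v) (map (Pair x) e) = (if x = v then map (Pair v) e else [])"
  by (induct e) auto

lemma mid_copy_seen:
  assumes q: "q = q1 @ r # q2" and vS: "v \<in> S"
  shows "filter (\<lambda>z. fst z = v) (mid (emit C q1 q2 r) S xs) = map (Pair v) (Tseen q q2 r (cnt v xs))"
  using vS
proof (induct xs arbitrary: S)
  case Nil then show ?case by (simp add: Tseen_def)
next
  case (Cons x xs)
  have IH: "filter (\<lambda>z. fst z = v) (mid (emit C q1 q2 r) (insert x S) xs) = map (Pair v) (Tseen q q2 r (cnt v xs))"
    using Cons by simp
  show ?case
  proof (cases "x = v")
    case True
    show ?thesis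
    proof (cases "cnt v xs")
      case 0
      then have "v \<notin> set xs" by (simp add: cnt_0_iff)
      then show ?thesis using True Cons.prems IH 0 by (simp add: filter_fst_Pair emit_simps Tseen_def)
    next
      case (Suc k)
      then have "v \<in> set xs" using cnt_0_iff[of v xs] by simp
      then show ?thesis using True Cons.prems IH Suc q by (simp add: filter_fst_Pair emit_simps Tseen_def)
    qed
  next
    case False
    then show ?thesis using IH by (simp add: filter_fst_Pair)
  qed
qed

lemma mid_copy_unseen:
  assumes q: "q = q1 @ r # q2" and vS: "v \<notin> S"
  shows "filter (\<lambda>z. fst z = v) (mid (emit C q1 q2 r) S xs) =
    map (Pair v) (if cnt v xs = 0 then [] else C @ q1 @ r # q2 @ q1 @ Tseen q q2 r (cnt v xs - 1))"
  using vS
proof (induct xs arbitrary: S)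
  case Nil then show ?case by simp
next
  case (Cons x xs)
  show ?case
  proof (cases "x = v")
    case True
    have "filter (\<lambda>z. fst z = v) (mid (emit C q1 q2 r) (insert x S) xs) = map (Pair v) (Tseen q q2 r (cnt v xs))"
      using mid_copy_seen[OF q, of v "insert x S"] True by simp
    then show ?thesis using True Cons.prems by (simp add: filter_fst_Pair emit_simps)
  next
    case False
    then show ?thesis using Cons by (simp add: filter_fst_Pair)
  qed
qed

lemma filter_snd_Pair: "filter (\<lambda>z. snd z = r) (map (Pair x) e) = map (Pair x) (filter (\<lambda>h. h = r) e)"
  by (induct e) auto

lemma mid_roots:
  assumes "r \<notin> set C" "r \<notin> set q1" "r \<notin> set q2"
  shows "filter (\<lambda>z. snd z = r) (mid (emit C q1 q2 r) S xs) = map (\<lambda>u. (u, r)) xs"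
proof (induct xs arbitrary: S)
  case Nil then show ?case by simp
next
  case (Cons x xs)
  have f: "filter (\<lambda>h. h = r) L = []" if "r \<notin> set L" for L using that by (induct L) auto
  have "filter (\<lambda>h. h = r) (emit C q1 q2 r b1 b2) = [r]" for b1 b2
    using assms by (simp add: emit_def f)
  then show ?case using Cons by (simp add: filter_snd_Pair)
qed

definition headp :: "'b list \<Rightarrow> 'a list \<Rightarrow> ('a \<times> 'b) list" where
  "headp B P = concat (map (\<lambda>h. map (\<lambda>u. (u, h)) P) B)"

lemma filter_eq_single: "distinct P \<Longrightarrow> v \<in> set P \<Longrightarrow> filter (\<lambda>u. u = v) P = [v]"
  by (induct P) (auto simp: filter_empty_conv)

lemma headp_copy:
  assumes "distinct P" "v \<in> set P"
  shows "filter (\<lambda>z. fst z = v) (headp B P) = map (Pair v) B"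
proof -
  have hh: "filter (\<lambda>z. fst z = v) (map (\<lambda>u. (u, h)) P) = [(v,h)]" for h
  proof -
    have "filter (\<lambda>z. fst z = v) (map (\<lambda>u. (u, h)) P) = map (\<lambda>u. (u, h)) (filter (\<lambda>u. u = v) P)"
      by (induct P) auto
    thus ?thesis using filter_eq_single[OF assms] by simp
  qed
  show ?thesis unfolding headp_def by (induct B) (simp_all add: hh)
qed

lemma headp_roots:
  "filter (\<lambda>z. snd z = r) (headp B P) = map (\<lambda>u. (u, r)) (concat (replicate (cnt r B) P))"
proof -
  have hh: "filter (\<lambda>z. snd z = r) (map (\<lambda>u. (u, h)) P) = (if h = r then map (\<lambda>u. (u, r)) P else [])" for h
    by (induct P) auto
  show ?thesis unfolding headp_def by (induct B) (simp_all add: hh)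
qed

lemma headp_fst: "set (map fst (headp B P)) \<subseteq> set P"
  unfolding headp_def by auto

lemma rep_app_rep:
  assumes "represents V E w"
  shows "represents V E (w @ concat (replicate j (remdups w))) \<and>
         remdups (w @ concat (replicate j (remdups w))) = remdups w"
proof (induct j)
  case 0 then show ?case using assms by simp
next
  case (Suc j)
  let ?Q = "remdups w"
  have eq: "w @ concat (replicate (Suc j) ?Q) = (w @ concat (replicate j ?Q)) @ take (length ?Q) (remdups (w @ concat (replicate j ?Q)))"
    using Suc by (simp add: replicate_append_same[symmetric])
  have r1: "represents V E (w @ concat (replicate (Suc j) ?Q))"
    unfolding eq by (rule rep_app_prefix) (use Suc in simp)
  have "set (w @ concat (replicate j ?Q)) \<subseteq> set ?Q" by auto
  hence "remdups ((w @ concat (replicate j ?Q)) @ ?Q) = ?Q"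
    by (simp add: remdups_append)
  then show ?case using r1 by (simp add: replicate_append_same[symmetric])
qed

lemma len_sum:
  assumes "set (map f xs) \<subseteq> A" "finite A"
  shows "length xs = (\<Sum>a\<in>A. length (filter (\<lambda>z. f z = a) xs))"
  using assms(1)
proof (induct xs)
  case Nil then show ?case by simp
next
  case (Cons x xs)
  have fx: "f x \<in> A" using Cons.prems by simp
  have "(\<Sum>a\<in>A. length (filter (\<lambda>z. f z = a) (x # xs))) =
        (\<Sum>a\<in>A. (if f x = a then 1 else 0) + length (filter (\<lambda>z. f z = a) xs))"
    by (rule sum.cong) auto
  also have "\<dots> = (\<Sum>a\<in>A. (if f x = a then 1 else 0)) + (\<Sum>a\<in>A. length (filter (\<lambda>z. f z = a) xs))"
    by (rule sum.distrib)
  also have "(\<Sum>a\<in>A. (if f x = a then 1 else (0::nat))) = 1"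
    using fx assms(2) by (simp add: sum.delta)
  finally show ?case using Cons by simp
qed

lemma not_alt_chunk:
  assumes "y \<notin> set e" "2 \<le> length (filter (\<lambda>z. z = x) e)"
  shows "\<not> alternate (a @ e @ b) x y"
proof -
  let ?P = "\<lambda>z. z = x \<or> z = y"
  have "filter ?P e = filter (\<lambda>z. z = x) e"
    using assms(1) by (induct e) auto
  also have "\<dots> = replicate (length (filter (\<lambda>z. z = x) e)) x"
    using replicate_length_filter[of x e] by (metis (mono_tags, lifting) filter_cong)
  finally obtain n where fe: "filter ?P e = x # x # replicate n x"
    using assms(2) by (metis add_2_eq_Suc' le_add_diff_inverse2 replicate_Suc)
  have "filter ?P (a @ e @ b) = filter ?P a @ x # x # (replicate n x @ filter ?P b)"
    using fe by simp
  hence "\<not> distinct_adj (filter ?P (a @ e @ b))"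
    by (simp add: distinct_adj_append_iff)
  thus ?thesis by (simp add: alt_iff)
qed

lemma cnt_pos_in: "h \<in> set L \<Longrightarrow> 1 \<le> length (filter (\<lambda>z. z = h) L)"
  by (induct L) auto

lemma filter_Pair_eq: "length (filter (\<lambda>z. z = (v, h)) (map (Pair v) E)) = length (filter (\<lambda>z. z = h) E)"
  by (induct E) auto

lemma cnt_disj: "u \<noteq> v \<Longrightarrow> length (filter (\<lambda>z. z = u \<or> z = v) xs) = cnt u xs + cnt v xs"
  by (induct xs) auto

lemma once_clique:
  assumes rG: "represents VG EG wG"
  shows "is_clique VG EG {v \<in> VG. cnt v wG = 1}"
  unfolding is_clique_def
proof (intro conjI ballI impI)
  show "{v \<in> VG. cnt v wG = 1} \<subseteq> VG" by auto
next
  fix u v assume u: "u \<in> {v \<in> VG. cnt v wG = 1}" and v: "v \<in> {v \<in> VG. cnt v wG = 1}" and uv: "u \<noteq> v"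
  let ?L = "filter (\<lambda>z. z = u \<or> z = v) wG"
  have l2: "length ?L = 2" using cnt_disj[OF uv, of wG] u v by simp
  have sw: "set wG = VG" using rG unfolding represents_def by auto
  have inu: "u \<in> set ?L" and inv: "v \<in> set ?L" using u v sw by auto
  have "\<exists>a b. ?L = [a,b]" using l2 by (auto simp: numeral_2_eq_2 length_Suc_conv)
  then obtain a b where ab: "?L = [a,b]" by blast
  have "a \<noteq> b" using ab inu inv uv by auto
  hence "alternate wG u v" unfolding alt_iff using ab by simp
  thus "EG u v" using rG u v uv unfolding represents_def by auto
qed

lemma construction:
  fixes VG :: "'a set" and EG :: "'a \<Rightarrow> 'a \<Rightarrow> bool"
    and VH :: "'b set" and EH :: "'b \<Rightarrow> 'b \<Rightarrow> bool" and r :: 'b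
  assumes sG: "simple_graph VG EG" and sH: "simple_graph VH EH"
    and rG: "represents VG EG wG" and rH: "represents VH EH wH" and rV: "r \<in> VH"
  shows "\<exists>W. represents (VG \<times> VH) (rooted_prod_E EG EH r) W \<and>
     length W \<le> card VH * length wG + card VG * length wH + (card VH - 1) * card {v \<in> VG. cnt v wG = 1}"
proof -
  have swG: "set wG = VG" using rG unfolding represents_def by auto
  have swH: "set wH = VH" using rH unfolding represents_def by auto
  have finG: "finite VG" using sG unfolding simple_graph_def by auto
  have irrG: "\<not> EG v v" for v using sG unfolding simple_graph_def by auto
  have irrH: "\<not> EH v v" for v using sH unfolding simple_graph_def by auto
  obtain B' C where wHs: "wH = B' @ r # C" and rC: "r \<notin> set C"
    using split_list_last[of r wH] rV swH by auto
  define q1 where "q1 = remdups (filter (\<lambda>x. x \<notin> set (r # C)) B')"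
  define q2 where "q2 = remdups C"
  define q where "q = remdups wH"
  define P where "P = rev (remdups (rev wG))"
  define em where "em = emit C q1 q2 r"
  define W where "W = headp (B' @ [r]) P @ mid em {} wG"
  define n where "n = card VH"
  have qeq: "q = q1 @ r # q2"
    unfolding q_def q1_def q2_def wHs using rC by (simp add: remdups_append_filter)
  have rq1: "r \<notin> set q1" unfolding q1_def by auto
  have rq2: "r \<notin> set q2" unfolding q2_def using rC by auto
  have sq2: "set q2 = set C" unfolding q2_def by simp
  have sq: "set q = VH" unfolding q_def using swH by simp
  have lq: "length q = n" unfolding n_def q_def using swH by (simp add: length_remdups_card_conv)
  have lq1: "length q1 \<le> n - 1" using lq qeq by simp
  have dP: "distinct P" unfolding P_def by simp
  have sP: "set P = VG" unfolding P_def using swG by simp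
  define U where "U v = B' @ [r] @ (C @ q1 @ r # q2 @ q1 @ Tseen q q2 r (cnt v wG - 1))" for v
  have copy: "filter (\<lambda>z. fst z = v) W = map (Pair v) (U v)" if "v \<in> VG" for v
  proof -
    have c0: "cnt v wG \<noteq> 0" using that swG cnt_0_iff[of v wG] by simp
    show ?thesis unfolding W_def U_def em_def
      using headp_copy[OF dP, of v "B' @ [r]"] mid_copy_unseen[OF qeq, of v "{}" C wG] that sP c0
      by simp
  qed
  have Urep: "represents VH EH (U v) \<and> length (U v) \<le> length wH + n * cnt v wG + (if cnt v wG = 1 then n - 1 else 0)"
    if "v \<in> VG" for v
  proof -
    define k where "k = cnt v wG"
    have k1: "k \<ge> 1" using that swG cnt_0_iff[of v wG] unfolding k_def by simp
    have Ueq: "U v = wH @ q @ q1 @ Tseen q q2 r (k - 1)"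
      unfolding U_def k_def wHs qeq by simp
    have RR: "represents VH EH (wH @ concat (replicate j q)) \<and> remdups (wH @ concat (replicate j q)) = q" for j
      using rep_app_rep[OF rH, of j] unfolding q_def by simp
    show ?thesis
    proof (cases "k = 1")
      case True
      have U1: "U v = (wH @ concat (replicate 1 q)) @ take (length q1) (remdups (wH @ concat (replicate 1 q)))"
        using Ueq True RR[of 1] qeq by (simp add: Tseen_def)
      have "represents VH EH (U v)" unfolding U1 by (rule rep_app_prefix) (use RR in blast)
      moreover have "length (U v) \<le> length wH + n * cnt v wG + (if cnt v wG = 1 then n - 1 else 0)"
        using Ueq True lq lq1 unfolding k_def by (simp add: Tseen_def)
      ultimately show ?thesis by blast
    next
      case False
      hence k2: "k \<ge> 2" using k1 by simp
      have "q @ q1 @ Tseen q q2 r (k - 1) = concat (replicate k q)"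
      proof -
        have "q @ q1 @ Tseen q q2 r (k - 1) = q @ q @ concat (replicate (k - 2) q)"
          using k2 qeq by (simp add: Tseen_def numeral_2_eq_2)
        also have "\<dots> = concat (replicate (Suc (Suc (k - 2))) q)" by simp
        also have "Suc (Suc (k - 2)) = k" using k2 by simp
        finally show ?thesis .
      qed
      hence Uk: "U v = wH @ concat (replicate k q)" using Ueq by simp
      have "represents VH EH (U v)" using RR Uk by simp
      moreover have "length (U v) = length wH + k * n" using Uk lq by (simp add: length_concat sum_list_replicate)
      ultimately show ?thesis using False unfolding k_def by (simp add: mult.commute)
    qed
  qed
  define c where "c = cnt r (B' @ [r])"
  define Z where "Z = concat (replicate c P) @ wG"
  have roots: "filter (\<lambda>z. snd z = r) W = map (\<lambda>u. (u, r)) Z"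
    unfolding W_def Z_def em_def using headp_roots[of r "B' @ [r]" P] mid_roots[OF rC rq1 rq2, of "{}" wG]
    by (simp add: c_def)
  have Zrep: "represents VG EG Z"
  proof -
    have "represents VG EG (rev wG @ concat (replicate c (remdups (rev wG))))"
      using rep_app_rep[OF rep_rev[OF rG], of c] by simp
    hence "represents VG EG (rev (rev wG @ concat (replicate c (remdups (rev wG)))))" by (rule rep_rev)
    moreover have "rev (rev wG @ concat (replicate c (remdups (rev wG)))) = Z"
      unfolding Z_def P_def by (simp add: rev_concat)
    ultimately show ?thesis by simp
  qed
  have fstW: "set (map fst W) \<subseteq> VG"
    unfolding W_def using headp_fst[of "B' @ [r]" P] mid_fst[of em "{}" wG] sP swG by auto
  have Usets: "set (U v) = VH" if "v \<in> VG" for v using Urep[OF that] unfolding represents_def by auto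
  have setW: "set W = VG \<times> VH"
  proof
    show "set W \<subseteq> VG \<times> VH"
    proof
      fix z assume z: "z \<in> set W"
      have fz: "fst z \<in> VG" using z fstW by auto
      have "z \<in> set (filter (\<lambda>y. fst y = fst z) W)" using z by simp
      hence "z \<in> set (map (Pair (fst z)) (U (fst z)))" using copy[OF fz] by simp
      then obtain x where x: "x \<in> set (U (fst z))" "z = Pair (fst z) x" by auto
      hence "snd z \<in> set (U (fst z))" by (metis snd_conv)
      thus "z \<in> VG \<times> VH" using fz Usets[OF fz] by (simp add: mem_Times_iff)
    qed
  next
    show "VG \<times> VH \<subseteq> set W"
    proof
      fix z assume z: "z \<in> VG \<times> VH"
      then obtain v h where zz: "z = (v,h)" "v \<in> VG" "h \<in> VH" by auto
      have "z \<in> set (map (Pair v) (U v))" using zz Usets[OF zz(2)] by auto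
      hence "z \<in> set (filter (\<lambda>y. fst y = v) W)" using copy[OF zz(2)] by simp
      thus "z \<in> set W" by simp
    qed
  qed
  have cross: "\<not> alternate W (v, h) y" if hv: "v \<in> VG" "h \<in> VH" "h \<noteq> r" "fst y \<noteq> v" for v h y
  proof -
    obtain ys zs where wGs: "wG = ys @ v # zs" and vys: "v \<notin> set ys"
      using split_list_first[of v wG] hv swG by auto
    obtain a b where ab: "mid em {} wG = a @ map (Pair v) (em (v \<in> {} \<union> set ys) (v \<in> set zs)) @ b"
      using mid_split[of em "{}" ys v zs] wGs by auto
    define E1 where "E1 = C @ q1 @ r # q2 @ q1"
    have emE: "em (v \<in> {} \<union> set ys) (v \<in> set zs) = E1" unfolding em_def E1_def using vys by (simp add: emit_simps)
    have Ws: "W = (headp (B' @ [r]) P @ a) @ map (Pair v) E1 @ b" unfolding W_def using ab emE by simp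
    have yn: "y \<notin> set (map (Pair v) E1)" using hv(4) by auto
    have hq: "h \<in> set q1 \<or> h \<in> set q2" using hv(2,3) sq qeq by auto
    have "2 \<le> length (filter (\<lambda>z. z = h) E1)"
    proof (cases "h \<in> set q1")
      case True
      then show ?thesis unfolding E1_def using cnt_pos_in[of h q1] by simp
    next
      case False
      hence "h \<in> set q2" "h \<in> set C" using hq sq2 by auto
      then show ?thesis unfolding E1_def using cnt_pos_in[of h q2] cnt_pos_in[of h C] by simp
    qed
    hence "2 \<le> length (filter (\<lambda>z. z = (v, h)) (map (Pair v) E1))" by (simp only: filter_Pair_eq)
    thus ?thesis unfolding Ws by (rule not_alt_chunk[OF yn])
  qed
  have repW: "represents (VG \<times> VH) (rooted_prod_E EG EH r) W"
    unfolding represents_def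
  proof (intro conjI ballI impI)
    show "set W = VG \<times> VH" by (rule setW)
  next
    fix x y assume x: "x \<in> VG \<times> VH" and y: "y \<in> VG \<times> VH" and xy: "x \<noteq> y"
    obtain v a where xx: "x = (v,a)" "v \<in> VG" "a \<in> VH" using x by auto
    obtain u b where yy: "y = (u,b)" "u \<in> VG" "b \<in> VH" using y by auto
    show "rooted_prod_E EG EH r x y \<longleftrightarrow> alternate W x y"
    proof (cases "v = u")
      case True
      have ab: "a \<noteq> b" using xy xx yy True by auto
      have "alternate W x y \<longleftrightarrow> alternate (filter (\<lambda>z. fst z = v) W) x y"
        using alt_filter[of "\<lambda>z. fst z = v" x y W] xx yy True by simp
      also have "\<dots> \<longleftrightarrow> alternate (map (Pair v) (U v)) (Pair v a) (Pair v b)"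
        using copy[OF xx(2)] xx yy True by simp
      also have "\<dots> \<longleftrightarrow> alternate (U v) a b"
        by (rule alt_map) (simp add: inj_def)
      also have "\<dots> \<longleftrightarrow> EH a b" using Urep[OF xx(2)] xx yy ab unfolding represents_def by auto
      finally show ?thesis unfolding rooted_prod_E_def using xx yy True irrG by auto
    next
      case False
      show ?thesis
      proof (cases "a = r \<and> b = r")
        case True
        have "alternate W x y \<longleftrightarrow> alternate (filter (\<lambda>z. snd z = r) W) x y"
          using alt_filter[of "\<lambda>z. snd z = r" x y W] xx yy True by simp
        also have "\<dots> \<longleftrightarrow> alternate (map (\<lambda>u. (u, r)) Z) ((\<lambda>u. (u, r)) v) ((\<lambda>u. (u, r)) u)"
          using roots xx yy True by simp
        also have "\<dots> \<longleftrightarrow> alternate Z v u"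
          by (rule alt_map) (simp add: inj_def)
        also have "\<dots> \<longleftrightarrow> EG v u" using Zrep xx yy False unfolding represents_def by auto
        finally show ?thesis unfolding rooted_prod_E_def using xx yy True False by auto
      next
        case False2: False
        have notE: "\<not> rooted_prod_E EG EH r x y" unfolding rooted_prod_E_def using xx yy False False2 by auto
        have "\<not> alternate W x y"
        proof (cases "a = r")
          case False3: False
          show ?thesis using cross[OF xx(2) xx(3) False3, of y] xx yy False by simp
        next
          case True
          hence br: "b \<noteq> r" using False2 by simp
          have "\<not> alternate W y x" using cross[OF yy(2) yy(3) br, of x] xx yy False by simp
          thus ?thesis using alt_sym by metis
        qed
        thus ?thesis using notE by simp
      qed
    qed
  qed
  have lenW: "length W = (\<Sum>v\<in>VG. length (U v))"
  proof -
    have "length W = (\<Sum>v\<in>VG. length (filter (\<lambda>z. fst z = v) W))"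
      by (rule len_sum[OF fstW finG])
    also have "\<dots> = (\<Sum>v\<in>VG. length (U v))"
      by (rule sum.cong) (simp_all add: copy)
    finally show ?thesis .
  qed
  have sumk: "(\<Sum>v\<in>VG. cnt v wG) = length wG"
    using len_sum[of "\<lambda>z. z" wG VG] swG finG by (simp add: cnt_def)
  have sumif: "(\<Sum>v\<in>VG. (if cnt v wG = 1 then n - 1 else 0)) = (n - 1) * card {v \<in> VG. cnt v wG = 1}"
  proof -
    have "(\<Sum>v\<in>VG. (if cnt v wG = 1 then n - 1 else 0)) = (\<Sum>v\<in>{v \<in> VG. cnt v wG = 1}. n - 1)"
      by (rule sum.inter_filter[OF finG, symmetric])
    thus ?thesis by simp
  qed
  have "length W \<le> (\<Sum>v\<in>VG. length wH + n * cnt v wG + (if cnt v wG = 1 then n - 1 else 0))"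
    unfolding lenW by (rule sum_mono) (use Urep in blast)
  also have "\<dots> = (\<Sum>v\<in>VG. length wH) + n * (\<Sum>v\<in>VG. cnt v wG) + (\<Sum>v\<in>VG. (if cnt v wG = 1 then n - 1 else 0))"
    by (simp only: sum.distrib sum_distrib_left)
  also have "\<dots> = card VG * length wH + n * length wG + (n - 1) * card {v \<in> VG. cnt v wG = 1}"
    unfolding sumk sumif by simp
  finally have "length W \<le> n * length wG + card VG * length wH + (n - 1) * card {v \<in> VG. cnt v wG = 1}"
    by simp
  thus ?thesis using repW unfolding n_def by blast
qed

theorem mainTheorem11:
  fixes VG :: "'a set" and EG :: "'a \<Rightarrow> 'a \<Rightarrow> bool"
    and VH :: "'b set" and EH :: "'b \<Rightarrow> 'b \<Rightarrow> bool" and r :: 'b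
  assumes "simple_graph VG EG" and "simple_graph VH EH"
    and "word_representable VG EG" and "word_representable VH EH"
    and "r \<in> VH"
  shows "min_rep_length (rooted_prod_V VG VH) (rooted_prod_E EG EH r)
         \<le> card VH * min_rep_length VG EG + card VG * min_rep_length VH EH
           + (card VH - 1) * clique_number VG EG"
proof -
  have exG: "\<exists>n w. represents VG EG w \<and> length w = n" using assms(3) unfolding word_representable_def by blast
  have "\<exists>w. represents VG EG w \<and> length w = min_rep_length VG EG"
    unfolding min_rep_length_def by (rule LeastI_ex) (rule exG)
  then obtain wG where rG: "represents VG EG wG" and lG: "length wG = min_rep_length VG EG" by blast
  have exH: "\<exists>n w. represents VH EH w \<and> length w = n" using assms(4) unfolding word_representable_def by blast
  have "\<exists>w. represents VH EH w \<and> length w = min_rep_length VH EH"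
    unfolding min_rep_length_def by (rule LeastI_ex) (rule exH)
  then obtain wH where rH: "represents VH EH wH" and lH: "length wH = min_rep_length VH EH" by blast
  obtain W where rW: "represents (VG \<times> VH) (rooted_prod_E EG EH r) W"
    and lW: "length W \<le> card VH * length wG + card VG * length wH + (card VH - 1) * card {v \<in> VG. cnt v wG = 1}"
    using construction[OF assms(1,2) rG rH assms(5)] by blast
  have m1: "min_rep_length (rooted_prod_V VG VH) (rooted_prod_E EG EH r) \<le> length W"
    unfolding min_rep_length_def rooted_prod_V_def by (rule Least_le) (use rW in blast)
  have finG: "finite VG" using assms(1) unfolding simple_graph_def by auto
  have "finite {K. is_clique VG EG K}"
    by (rule finite_subset[of _ "Pow VG"]) (auto simp: is_clique_def finG)
  hence "card {v \<in> VG. cnt v wG = 1} \<le> clique_number VG EG"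
    unfolding clique_number_def using once_clique[OF rG] by (intro Max_ge) auto
  hence "(card VH - 1) * card {v \<in> VG. cnt v wG = 1} \<le> (card VH - 1) * clique_number VG EG"
    by (rule mult_le_mono2)
  thus ?thesis using m1 lW[unfolded lG lH] by linarith
qed

end
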